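(* Let $\Pi=\{\Pi_\phi\}$ be a partition of a finite set of paths $\mathcal{P}$ into pairwise disjoint cells, and let $\Phi$ be a finite well-behaved set of filling classes $\phi=(Z_\phi,\Pi_\phi)$, partially ordered by $\ge_\xi$. Let $Z_\Phi=\bigcup_{\phi\in\Phi}Z_\phi$, where each PGT $\gamma$ has duration $E_\gamma>0$, minimum separation $t^{\mathrm{minsep}}_\gamma\ge0$ and positive integer minimal allocation $\mathcal{M}_\gamma$. Let $\Omega$ be the set of all totally ordered subsets (chains) of $(\Phi,\ge_\xi)$. Then for every $t_0$ there exists a valid schedule containing exactly $\mathcal{M}_\gamma$ PGAs of every $\gamma\in Z_\Phi$, all of whose PGAs lie within $[t_0,\,t_0+\mathcal{R}(Z_\Phi)]$, where $$\mathcal{R}(Z_\Phi)=\max_{\Theta\in\Omega}\ \sum_{\theta\in\Theta}R(Z_\theta).$$ In particular $\mathcal{R}(Z_\Phi)$ upper-bounds the minimum time needed to execute such a valid schedule.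
   Context: Let $\mathcal{R}$ be the set of vertices on paths of $\mathcal{P}$; for $Q\subseteq\mathcal{P}$, $\xi(Q)=\{r\in\mathcal{R}:\exists\pi\in Q,\ r\in\pi\}$, and $\xi(\pi)$ denotes the vertex set of a single path. Order: $\phi>_\xi\psi$ iff $\xi(\Pi_\psi)\subsetneq\xi(\Pi_\phi)$. $\Phi=\{\phi_i\}$ is well-behaved if (1) $\xi(\Pi_{\phi_i})\ne\xi(\Pi_{\phi_j})$ for $i\ne j$, and (2) for $i\ne j$, $\xi(\Pi_{\phi_i})\cap\xi(\Pi_{\phi_j})\ne\emptyset$ implies one of $\xi(\Pi_{\phi_i}),\xi(\Pi_{\phi_j})$ is a proper subset of the other. Each $Z_\phi$ is a set of PGTs with $\pi_\gamma\in\Pi_\phi$. For $Z_\phi=\{\gamma_0,\dots,\gamma_{M-1}\}$ indexed with $\mathcal{M}_{\gamma_0}\le\dots\le\mathcal{M}_{\gamma_{M-1}}$, $E_x=E_{\gamma_x}$, $\tau_x=t^{\mathrm{minsep}}_{\gamma_x}$: $n_0=\mathcal{M}_{\gamma_0}-1$, $n_x=\mathcal{M}_{\gamma_x}-\mathcal{M}_{\gamma_{x-1}}$, $c_x=\max(\max_{y\ge x}(E_y+\tau_y),\sum_{y=x}^{M-1}E_y)$, $R(Z_\phi)=\sum_x(n_xc_x+E_x)$, $R(\emptyset)=0$. A PGA of $\gamma$ is an interval $[s,s+E_\gamma)$ assigned to $\gamma$; a schedule is a finite set of PGAs. A resource conflict: distinct PGAs $[s,e)$ of $\gamma$ and $[s',e')$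 of $\gamma'$ with $\xi(\pi_\gamma)\cap\xi(\pi_{\gamma'})\ne\emptyset$ and $s\le s'<e$. A minsep violation: time-consecutive PGAs $[s,e)$, $[s'',e'')$ of the same $\gamma$ with $s''-e<t^{\mathrm{minsep}}_\gamma$. A schedule is valid if it has neither. *)

theory Defs
  imports Complex_Main "HOL-Library.Disjoint_Sets"
begin

definition xi :: "('p \<Rightarrow> 'v set) \<Rightarrow> 'p set \<Rightarrow> 'v set" where
  "xi verts Q = (\<Union>\<pi>\<in>Q. verts \<pi>)"

definition xi_gt :: "('p \<Rightarrow> 'v set) \<Rightarrow> ('c \<Rightarrow> 'p set) \<Rightarrow> 'c \<Rightarrow> 'c \<Rightarrow> bool" where
  "xi_gt verts cell \<phi> \<psi> \<longleftrightarrow> xi verts (cell \<psi>) \<subset> xi verts (cell \<phi>)"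

definition xi_ge :: "('p \<Rightarrow> 'v set) \<Rightarrow> ('c \<Rightarrow> 'p set) \<Rightarrow> 'c \<Rightarrow> 'c \<Rightarrow> bool" where
  "xi_ge verts cell \<phi> \<psi> \<longleftrightarrow> xi_gt verts cell \<phi> \<psi> \<or> \<phi> = \<psi>"

definition well_behaved :: "('p \<Rightarrow> 'v set) \<Rightarrow> ('c \<Rightarrow> 'p set) \<Rightarrow> 'c set \<Rightarrow> bool" where
  "well_behaved verts cell \<Phi> \<longleftrightarrow>
     (\<forall>\<phi>\<in>\<Phi>. \<forall>\<psi>\<in>\<Phi>. \<phi> \<noteq> \<psi> \<longrightarrow> xi verts (cell \<phi>) \<noteq> xi verts (cell \<psi>)) \<and>
     (\<forall>\<phi>\<in>\<Phi>. \<forall>\<psi>\<in>\<Phi>. \<phi> \<noteq> \<psi> \<longrightarrow> xi verts (cell \<phi>) \<inter> xi verts (cell \<psi>) \<noteq> {} \<longrightarrow>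
        xi verts (cell \<phi>) \<subset> xi verts (cell \<psi>) \<or> xi verts (cell \<psi>) \<subset> xi verts (cell \<phi>))"

definition xi_chain :: "('p \<Rightarrow> 'v set) \<Rightarrow> ('c \<Rightarrow> 'p set) \<Rightarrow> 'c set \<Rightarrow> 'c set \<Rightarrow> bool" where
  "xi_chain verts cell \<Phi> \<Theta> \<longleftrightarrow> \<Theta> \<subseteq> \<Phi> \<and>
     (\<forall>a\<in>\<Theta>. \<forall>b\<in>\<Theta>. xi_ge verts cell a b \<or> xi_ge verts cell b a)"

text \<open>R of a list [g_0,...,g_{M-1}] of PGTs sorted by minimal allocation.\<close>
definition R_list :: "('g \<Rightarrow> real) \<Rightarrow> ('g \<Rightarrow> real) \<Rightarrow> ('g \<Rightarrow> nat) \<Rightarrow> 'g list \<Rightarrow> real" where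
  "R_list E tau M gs =
     (let L = length gs;
          n = (\<lambda>x. if x = 0 then real (M (gs ! 0)) - 1
                   else real (M (gs ! x)) - real (M (gs ! (x - 1))));
          c = (\<lambda>x. max (Max ((\<lambda>y. E (gs ! y) + tau (gs ! y)) ` {x..<L}))
                        (\<Sum>y=x..<L. E (gs ! y)))
      in (\<Sum>x<L. n x * c x + E (gs ! x)))"

text \<open>R(Z) for a finite set Z of PGTs: evaluate R_list on an enumeration of Z
  sorted by nondecreasing minimal allocation (value independent of tie order).
  R of the empty set is 0.\<close>
definition R_set :: "('g \<Rightarrow> real) \<Rightarrow> ('g \<Rightarrow> real) \<Rightarrow> ('g \<Rightarrow> nat) \<Rightarrow> 'g set \<Rightarrow> real" where
  "R_set E tau M Z = R_list E tau M
     (SOME gs. distinct gs \<and> set gs = Z \<and> sorted (map M gs))"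

text \<open>A PGA is a pair (gamma, s) standing for the interval [s, s + E gamma).
  A schedule is a finite set of PGAs.\<close>
definition resource_conflict ::
  "('p \<Rightarrow> 'v set) \<Rightarrow> ('g \<Rightarrow> 'p) \<Rightarrow> ('g \<Rightarrow> real) \<Rightarrow> ('g \<times> real) set \<Rightarrow> bool" where
  "resource_conflict verts path E S \<longleftrightarrow>
     (\<exists>(g, s)\<in>S. \<exists>(g', s')\<in>S. (g, s) \<noteq> (g', s') \<and>
        verts (path g) \<inter> verts (path g') \<noteq> {} \<and> s \<le> s' \<and> s' < s + E g)"

definition minsep_violation ::
  "('g \<Rightarrow> real) \<Rightarrow> ('g \<Rightarrow> real) \<Rightarrow> ('g \<times> real) set \<Rightarrow> bool" where
  "minsep_violation E tau S \<longleftrightarrow>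
     (\<exists>g s s''. (g, s) \<in> S \<and> (g, s'') \<in> S \<and> s < s'' \<and>
        \<not> (\<exists>s'. (g, s') \<in> S \<and> s < s' \<and> s' < s'') \<and>
        s'' - (s + E g) < tau g)"

definition valid_schedule ::
  "('p \<Rightarrow> 'v set) \<Rightarrow> ('g \<Rightarrow> 'p) \<Rightarrow> ('g \<Rightarrow> real) \<Rightarrow> ('g \<Rightarrow> real) \<Rightarrow> ('g \<times> real) set \<Rightarrow> bool" where
  "valid_schedule verts path E tau S \<longleftrightarrow> finite S \<and>
     \<not> resource_conflict verts path E S \<and> \<not> minsep_violation E tau S"

end

theory Submission
  imports Defs
begin

definition no_overlap :: "('g \<Rightarrow> real) \<Rightarrow> ('g \<times> real) set \<Rightarrow> bool" where
  "no_overlap E S \<longleftrightarrow> (\<forall>g s g' s'. (g,s)\<in>S \<longrightarrow> (g',s')\<in>S \<longrightarrow> (g,s) \<noteq> (g',s') \<longrightarrow> \<not>(s \<le> s' \<and> s' < s + E g))"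

definition okS :: "('g \<Rightarrow> real) \<Rightarrow> ('g \<Rightarrow> real) \<Rightarrow> ('g \<times> real) set \<Rightarrow> bool" where
  "okS E tau S \<longleftrightarrow> finite S \<and> no_overlap E S \<and> \<not> minsep_violation E tau S"

lemma okS_empty: "okS E tau {}"
  by (auto simp: okS_def no_overlap_def minsep_violation_def)

lemma okS_single: "okS E tau {(g,t)}"
  by (auto simp: okS_def no_overlap_def minsep_violation_def)

lemma okS_union:
  assumes "okS E tau S1" "okS E tau S2"
    and "\<And>g s g' s'. (g,s)\<in>S1 \<Longrightarrow> (g',s')\<in>S2 \<Longrightarrow> s + E g \<le> s' \<and> s < s'"
    and "\<And>g s s''. (g,s)\<in>S1 \<Longrightarrow> (g,s'')\<in>S2 \<Longrightarrow> tau g \<le> s'' - (s + E g)"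
  shows "okS E tau (S1 \<union> S2)"
proof -
  have "finite (S1 \<union> S2)" using assms(1,2) by (simp add: okS_def)
  moreover have "no_overlap E (S1 \<union> S2)"
    unfolding no_overlap_def
  proof (intro allI impI)
    fix g s g' s' assume a: "(g,s) \<in> S1 \<union> S2" "(g',s') \<in> S1 \<union> S2" "(g,s) \<noteq> (g',s')"
    show "\<not>(s \<le> s' \<and> s' < s + E g)"
    proof (cases "(g,s)\<in>S1")
      case g1: True
      show ?thesis
      proof (cases "(g',s')\<in>S1")
        case True
        then show ?thesis using g1 a(3) assms(1) unfolding okS_def no_overlap_def by blast
      next
        case False
        then have "(g',s')\<in>S2" using a by blast
        then show ?thesis using assms(3)[OF g1] by force
      qed
    next
      case False
      then have g2: "(g,s)\<in>S2" using a by blast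
      show ?thesis
      proof (cases "(g',s')\<in>S1")
        case True
        then show ?thesis using assms(3)[OF True g2] by linarith
      next
        case False
        then have "(g',s')\<in>S2" using a by blast
        then show ?thesis using g2 a(3) assms(2) unfolding okS_def no_overlap_def by blast
      qed
    qed
  qed
  moreover have "\<not> minsep_violation E tau (S1 \<union> S2)"
  proof
    assume "minsep_violation E tau (S1 \<union> S2)"
    then obtain g s s'' where v: "(g,s)\<in>S1\<union>S2" "(g,s'')\<in>S1\<union>S2" "s < s''"
      "\<not>(\<exists>s'. (g,s')\<in>S1\<union>S2 \<and> s < s' \<and> s' < s'')" "s'' - (s + E g) < tau g"
      unfolding minsep_violation_def by blast
    consider "(g,s)\<in>S1" "(g,s'')\<in>S1" | "(g,s)\<in>S1" "(g,s'')\<in>S2"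
      | "(g,s)\<in>S2" "(g,s'')\<in>S1" | "(g,s)\<in>S2" "(g,s'')\<in>S2" using v by blast
    then show False
    proof cases
      case 1 then show False using v assms(1) unfolding okS_def minsep_violation_def by blast
    next
      case 2 then show False using v assms(4)[OF 2] by linarith
    next
      case 3 then show False using v assms(3)[OF 3(2) 3(1)] by linarith
    next
      case 4 then show False using v assms(2) unfolding okS_def minsep_violation_def by blast
    qed
  qed
  ultimately show ?thesis by (simp add: okS_def)
qed

definition Pof :: "('g \<Rightarrow> real) \<Rightarrow> 'g list \<Rightarrow> 'g \<Rightarrow> real" where
  "Pof E gs g = sum_list (map E (takeWhile (\<lambda>x. x \<noteq> g) gs))"

lemma Pof_nonneg: "\<forall>x\<in>set gs. E x \<ge> 0 \<Longrightarrow> Pof E gs g \<ge> 0"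
  unfolding Pof_def by (rule sum_list_nonneg) (auto dest: set_takeWhileD)

lemma Pof_end: "\<forall>x\<in>set gs. E x \<ge> 0 \<Longrightarrow> g \<in> set gs \<Longrightarrow> Pof E gs g + E g \<le> sum_list (map E gs)"
proof (induction gs)
  case Nil then show ?case by simp
next
  case (Cons a gs)
  show ?case
  proof (cases "a = g")
    case True
    then show ?thesis using Cons.prems by (auto simp: Pof_def intro!: sum_list_nonneg)
  next
    case False
    then have "Pof E gs g + E g \<le> sum_list (map E gs)" using Cons by auto
    then show ?thesis using False by (simp add: Pof_def)
  qed
qed

fun rnd :: "('g \<Rightarrow> real) \<Rightarrow> 'g list \<Rightarrow> real \<Rightarrow> ('g \<times> real) set" where
  "rnd E [] t = {}"
| "rnd E (g # gs) t = insert (g, t) (rnd E gs (t + E g))"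

lemma rnd_eq: "distinct gs \<Longrightarrow> (g,s) \<in> rnd E gs t \<longleftrightarrow> g \<in> set gs \<and> s = t + Pof E gs g"
proof (induction gs arbitrary: t)
  case Nil then show ?case by simp
next
  case (Cons a gs)
  have IH: "(g,s) \<in> rnd E gs (t + E a) \<longleftrightarrow> g \<in> set gs \<and> s = t + E a + Pof E gs g"
    using Cons by simp
  show ?case
  proof (cases "g = a")
    case True
    have "Pof E (a # gs) g = 0" using True by (simp add: Pof_def)
    then show ?thesis using True IH Cons.prems by auto
  next
    case False
    have "Pof E (a # gs) g = E a + Pof E gs g" using False by (simp add: Pof_def)
    then show ?thesis using False IH by auto
  qed
qed

lemma rnd_ok: "distinct gs \<Longrightarrow> \<forall>g\<in>set gs. E g > 0 \<Longrightarrow> okS E tau (rnd E gs t)"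
proof (induction gs arbitrary: t)
  case Nil then show ?case by (simp add: okS_empty)
next
  case (Cons a gs)
  have "okS E tau ({(a,t)} \<union> rnd E gs (t + E a))"
  proof (rule okS_union)
    show "okS E tau {(a,t)}" by (rule okS_single)
    show "okS E tau (rnd E gs (t + E a))" using Cons by auto
    fix g s g' s' assume "(g,s) \<in> {(a,t)}" "(g',s') \<in> rnd E gs (t + E a)"
    then have "s = t" "g = a" "s' = t + E a + Pof E gs g'" using rnd_eq[of gs g' s'] Cons.prems by auto
    moreover have "Pof E gs g' \<ge> 0" using Cons.prems by (intro Pof_nonneg) auto
    moreover have "E a > 0" using Cons.prems by auto
    ultimately show "s + E g \<le> s' \<and> s < s'" by auto
  next
    fix g s s'' assume "(g,s) \<in> {(a,t)}" "(g,s'') \<in> rnd E gs (t + E a)"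
    then show "tau g \<le> s'' - (s + E g)" using rnd_eq[of gs g s''] Cons.prems by auto
  qed
  then show ?case by simp
qed


definition nn :: "('g \<Rightarrow> nat) \<Rightarrow> 'g list \<Rightarrow> nat \<Rightarrow> real" where
  "nn M gs x = (if x = 0 then real (M (gs ! 0)) - 1 else real (M (gs ! x)) - real (M (gs ! (x - 1))))"

definition cc :: "('g \<Rightarrow> real) \<Rightarrow> ('g \<Rightarrow> real) \<Rightarrow> 'g list \<Rightarrow> nat \<Rightarrow> real" where
  "cc E tau gs x = max (Max ((\<lambda>y. E (gs ! y) + tau (gs ! y)) ` {x..<length gs}))
                        (\<Sum>y=x..<length gs. E (gs ! y))"

lemma R_list_alt: "R_list E tau M gs = (\<Sum>x<length gs. nn M gs x * cc E tau gs x + E (gs ! x))"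
  by (simp add: R_list_def Let_def nn_def cc_def)

lemma R_list_Nil: "R_list E tau M [] = 0"
  by (simp add: R_list_alt)

lemma cc_Suc: "cc E tau (g0 # rest) (Suc x) = cc E tau rest x"
proof -
  have "(\<lambda>y. E ((g0 # rest) ! y) + tau ((g0 # rest) ! y)) ` {Suc x..<Suc (length rest)}
      = (\<lambda>y. E (rest ! y) + tau (rest ! y)) ` {x..<length rest}"
  proof -
    have e: "{Suc x..<Suc (length rest)} = Suc ` {x..<length rest}" by simp
    show ?thesis by (simp only: e image_image nth_Cons_Suc)
  qed
  moreover have "(\<Sum>y=Suc x..<Suc (length rest). E ((g0 # rest) ! y)) = (\<Sum>y=x..<length rest. E (rest ! y))"
    by (simp only: sum.shift_bounds_Suc_ivl nth_Cons_Suc)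
  ultimately show ?thesis by (simp add: cc_def)
qed

lemma R_list_cons1:
  assumes "M g0 = 1"
  shows "R_list E tau M (g0 # rest) = E g0 + R_list E tau M rest"
proof -
  have nS: "nn M (g0 # rest) (Suc x) = nn M rest x" for x
    using assms by (cases x) (auto simp: nn_def)
  have n0: "nn M (g0 # rest) 0 = 0" using assms by (simp add: nn_def)
  have "R_list E tau M (g0 # rest) = (\<Sum>x<Suc (length rest). nn M (g0 # rest) x * cc E tau (g0 # rest) x + E ((g0 # rest) ! x))"
    by (simp add: R_list_alt)
  also have "\<dots> = nn M (g0 # rest) 0 * cc E tau (g0 # rest) 0 + E g0 +
      (\<Sum>x<length rest. nn M (g0 # rest) (Suc x) * cc E tau (g0 # rest) (Suc x) + E ((g0 # rest) ! Suc x))"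
    unfolding sum.lessThan_Suc_shift by simp
  also have "\<dots> = E g0 + R_list E tau M rest"
    by (simp add: nS cc_Suc R_list_alt n0)
  finally show ?thesis .
qed

lemma R_list_dec:
  assumes "gs \<noteq> []" "\<forall>g\<in>set gs. M g \<ge> 1"
  shows "R_list E tau M gs = cc E tau gs 0 + R_list E tau (\<lambda>g. M g - 1) gs"
proof -
  obtain g0 rest where gs: "gs = g0 # rest" using assms(1) by (cases gs) auto
  have Mr: "real (M g - 1) = real (M g) - 1" if "g \<in> set gs" for g
    using assms(2) that by (simp add: of_nat_diff)
  have n0: "nn (\<lambda>g. M g - 1) gs 0 = nn M gs 0 - 1"
    using Mr[of g0] by (simp add: nn_def gs)
  have nS: "nn (\<lambda>g. M g - 1) gs (Suc x) = nn M gs (Suc x)" if "x < length rest" for x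
  proof -
    have "Suc x < length gs" "x < length gs" using that by (auto simp: gs)
    then have "gs ! Suc x \<in> set gs" "gs ! x \<in> set gs" by (metis nth_mem)+
    then show ?thesis using Mr by (simp add: nn_def)
  qed
  have A: "R_list E tau M gs = nn M gs 0 * cc E tau gs 0 + E g0 +
      (\<Sum>x<length rest. nn M gs (Suc x) * cc E tau gs (Suc x) + E (gs ! Suc x))"
    unfolding R_list_alt by (simp only: gs length_Cons sum.lessThan_Suc_shift nth_Cons_0)
  have B: "R_list E tau (\<lambda>g. M g - 1) gs = nn (\<lambda>g. M g - 1) gs 0 * cc E tau gs 0 + E g0 +
      (\<Sum>x<length rest. nn (\<lambda>g. M g - 1) gs (Suc x) * cc E tau gs (Suc x) + E (gs ! Suc x))"
    unfolding R_list_alt by (simp only: gs length_Cons sum.lessThan_Suc_shift nth_Cons_0)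
  have C: "(\<Sum>x<length rest. nn (\<lambda>g. M g - 1) gs (Suc x) * cc E tau gs (Suc x) + E (gs ! Suc x))
      = (\<Sum>x<length rest. nn M gs (Suc x) * cc E tau gs (Suc x) + E (gs ! Suc x))"
  proof (rule sum.cong)
    fix x assume "x \<in> {..<length rest}"
    then show "nn (\<lambda>g. M g - 1) gs (Suc x) * cc E tau gs (Suc x) + E (gs ! Suc x) =
       nn M gs (Suc x) * cc E tau gs (Suc x) + E (gs ! Suc x)" using nS[of x] by simp
  qed simp
  have B': "R_list E tau (\<lambda>g. M g - 1) gs = (nn M gs 0 - 1) * cc E tau gs 0 + E g0 +
      (\<Sum>x<length rest. nn M gs (Suc x) * cc E tau gs (Suc x) + E (gs ! Suc x))"
    using B C n0 by (simp only:)
  show ?thesis unfolding A B' by (simp add: algebra_simps)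
qed

lemma cc0_ge:
  assumes "g \<in> set gs"
  shows "E g + tau g \<le> cc E tau gs 0" "sum_list (map E gs) \<le> cc E tau gs 0"
proof -
  have "(\<lambda>y. E (gs ! y) + tau (gs ! y)) ` {0..<length gs} = (\<lambda>g. E g + tau g) ` set gs"
  proof -
    have "(\<lambda>y. E (gs ! y) + tau (gs ! y)) ` {0..<length gs} = (\<lambda>g. E g + tau g) ` ((!) gs ` {0..<length gs})"
      by (simp only: image_image)
    then show ?thesis using nth_image[of "length gs" gs] by simp
  qed
  moreover have "E g + tau g \<le> Max ((\<lambda>g. E g + tau g) ` set gs)"
    using assms by (intro Max_ge) auto
  ultimately show "E g + tau g \<le> cc E tau gs 0" by (simp add: cc_def)
  have "sum_list (map E gs) = (\<Sum>y=0..<length gs. E (gs ! y))"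
    by (simp add: sum_list_sum_nth)
  then show "sum_list (map E gs) \<le> cc E tau gs 0" by (simp add: cc_def)
qed


lemma sum_list_dec: "\<forall>g\<in>set xs. 1 \<le> M g \<Longrightarrow> sum_list (map (\<lambda>g. M g - 1) xs) + length xs = sum_list (map M xs)"
  by (induction xs) auto

lemma fin_slice: "finite S \<Longrightarrow> finite {s. (g,s) \<in> S}"
proof -
  assume "finite S"
  moreover have "{s. (g,s) \<in> S} \<subseteq> snd ` S" by force
  ultimately show ?thesis by (meson finite_imageI finite_subset)
qed

lemma class_sched:
  assumes "distinct gs" "sorted (map M gs)" "\<forall>g\<in>set gs. E g > 0 \<and> tau g \<ge> 0 \<and> M g \<ge> 1"
  shows "\<exists>S. okS E tau S \<and> S \<subseteq> set gs \<times> UNIV \<and> (\<forall>g\<in>set gs. card {s. (g,s)\<in>S} = M g) \<and>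
     (\<forall>(g,s)\<in>S. t + Pof E gs g \<le> s \<and> s + E g \<le> t + R_list E tau M gs)"
  using assms
proof (induction "sum_list (map M gs)" arbitrary: gs M t rule: less_induct)
  case less
  show ?case
  proof (cases gs)
    case Nil
    then show ?thesis by (intro exI[of _ "{}"]) (auto simp: okS_empty)
  next
    case (Cons g0 rest)
    have Enn: "\<forall>x\<in>set gs. E x \<ge> 0" using less.prems(3) by auto
    show ?thesis
    proof (cases "M g0 = 1")
      case True
      have lt: "sum_list (map M rest) < sum_list (map M gs)" using Cons True by simp
      have dr: "distinct rest" "sorted (map M rest)" "\<forall>g\<in>set rest. E g > 0 \<and> tau g \<ge> 0 \<and> M g \<ge> 1"
        using less.prems Cons by auto
      obtain S' where S': "okS E tau S'" "S' \<subseteq> set rest \<times> UNIV" "\<forall>g\<in>set rest. card {s. (g,s)\<in>S'} = M g"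
        "\<forall>(g,s)\<in>S'. (t + E g0) + Pof E rest g \<le> s \<and> s + E g \<le> (t + E g0) + R_list E tau M rest"
        using less.hyps[OF lt dr] by blast
      have g0n: "g0 \<notin> set rest" using less.prems(1) Cons by auto
      have E0: "E g0 > 0" using less.prems(3) Cons by auto
      have Pr: "Pof E rest g \<ge> 0" for g using dr(3) by (intro Pof_nonneg) auto
      have Pg: "Pof E gs g = E g0 + Pof E rest g" if "g \<noteq> g0" for g
        using that Cons by (simp add: Pof_def)
      have Rr: "R_list E tau M rest \<ge> 0"
      proof (cases rest)
        case Nil then show ?thesis by (simp add: R_list_Nil)
      next
        case (Cons g1 r1)
        then have "g1 \<in> set rest" by simp
        then have "card {s. (g1,s)\<in>S'} \<ge> 1" using S'(3) dr(3) by auto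
        then obtain s1 where "(g1,s1) \<in> S'" by (metis (mono_tags, lifting) card.empty empty_Collect_eq not_one_le_zero)
        then have "(t + E g0) + Pof E rest g1 \<le> s1 \<and> s1 + E g1 \<le> (t + E g0) + R_list E tau M rest"
          using S'(4) by blast
        then show ?thesis using Pr[of g1] dr(3) \<open>g1 \<in> set rest\<close> by fastforce
      qed
      define S where "S = {(g0,t)} \<union> S'"
      have "okS E tau S" unfolding S_def
      proof (rule okS_union)
        show "okS E tau {(g0,t)}" by (rule okS_single)
        show "okS E tau S'" by (rule S'(1))
        fix g s g' s' assume "(g,s) \<in> {(g0,t)}" "(g',s') \<in> S'"
        then show "s + E g \<le> s' \<and> s < s'" using S'(4) Pr[of g'] E0 by fastforce
      next
        fix g s s'' assume "(g,s) \<in> {(g0,t)}" "(g,s'') \<in> S'"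
        then show "tau g \<le> s'' - (s + E g)" using S'(2) g0n by auto
      qed
      moreover have "S \<subseteq> set gs \<times> UNIV" using S'(2) Cons by (auto simp: S_def)
      moreover have "\<forall>g\<in>set gs. card {s. (g,s)\<in>S} = M g"
      proof
        fix g assume g: "g \<in> set gs"
        show "card {s. (g,s)\<in>S} = M g"
        proof (cases "g = g0")
          case True
          then have "{s. (g,s)\<in>S} = {t}" using S'(2) g0n by (auto simp: S_def)
          then show ?thesis using True \<open>M g0 = 1\<close> by simp
        next
          case False
          then have "{s. (g,s)\<in>S} = {s. (g,s)\<in>S'}" by (auto simp: S_def)
          then show ?thesis using S'(3) g False Cons by auto
        qed
      qed
      moreover have "\<forall>(g,s)\<in>S. t + Pof E gs g \<le> s \<and> s + E g \<le> t + R_list E tau M gs"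
      proof (intro ballI, clarify)
        fix g s assume gs_in: "(g,s) \<in> S"
        have RR: "R_list E tau M gs = E g0 + R_list E tau M rest" using Cons True R_list_cons1 by simp
        show "t + Pof E gs g \<le> s \<and> s + E g \<le> t + R_list E tau M gs"
        proof (cases "(g,s) \<in> S'")
          case True
          then have "g \<noteq> g0" "g \<in> set rest" using S'(2) g0n by auto
          then show ?thesis using S'(4) True Pg RR by fastforce
        next
          case False
          then have "g = g0" "s = t" using gs_in by (auto simp: S_def)
          then show ?thesis using RR Rr Cons by (simp add: Pof_def)
        qed
      qed
      ultimately show ?thesis by blast
    next
      case False
      have M2: "\<forall>g\<in>set gs. M g \<ge> 2"
      proof
        fix g assume g: "g \<in> set gs"
        have "M g0 \<ge> 2" using False less.prems(3) Cons by fastforce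
        moreover have "M g0 \<le> M g" using less.prems(2) Cons g by auto
        ultimately show "M g \<ge> 2" by simp
      qed
      define M' where "M' = (\<lambda>g. M g - 1)"
      have lt: "sum_list (map M' gs) < sum_list (map M gs)"
        using sum_list_dec[of gs M] less.prems(3) Cons unfolding M'_def by auto
      have sM': "sorted (map M' gs)"
        using less.prems(2) unfolding M'_def sorted_map
        by (rule sorted_wrt_mono_rel[rotated]) auto
      have dr: "distinct gs" "sorted (map M' gs)" "\<forall>g\<in>set gs. E g > 0 \<and> tau g \<ge> 0 \<and> M' g \<ge> 1"
        using less.prems sM' M2 unfolding M'_def by auto
      define c0 where "c0 = cc E tau gs 0"
      obtain S' where S': "okS E tau S'" "S' \<subseteq> set gs \<times> UNIV" "\<forall>g\<in>set gs. card {s. (g,s)\<in>S'} = M' g"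
        "\<forall>(g,s)\<in>S'. (t + c0) + Pof E gs g \<le> s \<and> s + E g \<le> (t + c0) + R_list E tau M' gs"
        using less.hyps[OF lt dr] by blast
      have S4: "t + c0 + Pof E gs g \<le> s \<and> s + E g \<le> t + c0 + R_list E tau M' gs" if "(g,s) \<in> S'" for g s
        using S'(4) that by blast
      have Pr: "Pof E gs g \<ge> 0" for g using Enn by (intro Pof_nonneg) auto
      have c0a: "E g + tau g \<le> c0" if "g \<in> set gs" for g using cc0_ge(1)[OF that] unfolding c0_def .
      have c0b: "sum_list (map E gs) \<le> c0" using cc0_ge(2)[of g0 gs] Cons unfolding c0_def by simp
      have RR: "R_list E tau M gs = c0 + R_list E tau M' gs"
        using R_list_dec[of gs M E tau] Cons less.prems(3) unfolding c0_def M'_def by auto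
      have Rr: "R_list E tau M' gs \<ge> 0"
      proof -
        have "g0 \<in> set gs" using Cons by simp
        then have "card {s. (g0,s)\<in>S'} \<ge> 1" using S'(3) dr(3) by auto
        then obtain s1 where "(g0,s1) \<in> S'" by (metis (mono_tags, lifting) card.empty empty_Collect_eq not_one_le_zero)
        then have "(t + c0) + Pof E gs g0 \<le> s1 \<and> s1 + E g0 \<le> (t + c0) + R_list E tau M' gs"
          using S'(4) by blast
        then show ?thesis using Pr[of g0] dr(3) \<open>g0 \<in> set gs\<close> by fastforce
      qed
      have rnd_mem: "(g,s) \<in> rnd E gs t \<longleftrightarrow> g \<in> set gs \<and> s = t + Pof E gs g" for g s
        using rnd_eq[OF less.prems(1)] by blast
      have rnd_end: "s + E g \<le> t + c0" if "(g,s) \<in> rnd E gs t" for g s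
        using that rnd_mem Pof_end[OF Enn, of g] c0b by auto
      define S where "S = rnd E gs t \<union> S'"
      have "okS E tau S" unfolding S_def
      proof (rule okS_union)
        show "okS E tau (rnd E gs t)" using less.prems by (intro rnd_ok) auto
        show "okS E tau S'" by (rule S'(1))
        fix g s g' s' assume a: "(g,s) \<in> rnd E gs t" "(g',s') \<in> S'"
        have "s + E g \<le> t + c0" using rnd_end a(1) .
        moreover have "t + c0 \<le> s'" using S4[OF a(2)] Pr[of g'] by linarith
        moreover have "E g > 0" using a(1) rnd_mem less.prems(3) by auto
        ultimately show "s + E g \<le> s' \<and> s < s'" by auto
      next
        fix g s s'' assume a: "(g,s) \<in> rnd E gs t" "(g,s'') \<in> S'"
        then have "s = t + Pof E gs g" "g \<in> set gs" using rnd_mem by auto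
        moreover have "t + c0 + Pof E gs g \<le> s''" using S4[OF a(2)] by linarith
        ultimately show "tau g \<le> s'' - (s + E g)" using c0a[of g] by linarith
      qed
      moreover have "S \<subseteq> set gs \<times> UNIV" using S'(2) rnd_mem by (auto simp: S_def)
      moreover have "\<forall>g\<in>set gs. card {s. (g,s)\<in>S} = M g"
      proof
        fix g assume g: "g \<in> set gs"
        have E0: "E g > 0" using g less.prems(3) by auto
        have "{s. (g,s)\<in>S} = insert (t + Pof E gs g) {s. (g,s)\<in>S'}"
          using g rnd_mem by (auto simp: S_def)
        moreover have "t + Pof E gs g \<notin> {s. (g,s)\<in>S'}"
        proof
          assume "t + Pof E gs g \<in> {s. (g,s)\<in>S'}"
          then have "t + c0 + Pof E gs g \<le> t + Pof E gs g" using S4 by blast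
          moreover have "tau g \<ge> 0" using less.prems(3) g by blast
          ultimately show False using c0a[OF g] E0 by linarith
        qed
        moreover have "finite {s. (g,s)\<in>S'}"
        proof -
          have "finite S'" using S'(1) by (simp add: okS_def)
          then show ?thesis by (rule fin_slice)
        qed
        ultimately have "card {s. (g,s)\<in>S} = Suc (card {s. (g,s)\<in>S'})" by simp
        also have "card {s. (g,s)\<in>S'} = M' g" using S'(3) g by blast
        finally show "card {s. (g,s)\<in>S} = M g" using M2 g unfolding M'_def by auto
      qed
      moreover have "\<forall>(g,s)\<in>S. t + Pof E gs g \<le> s \<and> s + E g \<le> t + R_list E tau M gs"
      proof (intro ballI, clarify)
        fix g s assume gs_in: "(g,s) \<in> S"
        show "t + Pof E gs g \<le> s \<and> s + E g \<le> t + R_list E tau M gs"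
        proof (cases "(g,s) \<in> S'")
          case True
          have "0 \<le> sum_list (map E gs)" using Enn by (auto intro!: sum_list_nonneg)
          then have "0 \<le> c0" using c0b by linarith
          then show ?thesis using S4[OF True] RR Pr[of g] by linarith
        next
          case False
          then have "(g,s) \<in> rnd E gs t" using gs_in by (auto simp: S_def)
          then have "s = t + Pof E gs g" "s + E g \<le> t + c0" using rnd_end rnd_mem by auto
          then show ?thesis using RR Rr by linarith
        qed
      qed
      ultimately show ?thesis by blast
    qed
  qed
qed


lemma ex_sorted_list: "finite A \<Longrightarrow> \<exists>gs. distinct gs \<and> set gs = A \<and> sorted (map (M::'g \<Rightarrow> nat) gs)"
proof -
  assume "finite A"
  then obtain xs where "distinct xs" "set xs = A" using finite_distinct_list by blast
  then show ?thesis by (intro exI[of _ "sort_key M xs"]) (simp add: sorted_sort_key)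
qed

theorem mainTheorem6:
  fixes verts :: "'p \<Rightarrow> 'v set"
    and P :: "'p set" and Pi :: "'p set set"
    and \<Phi> :: "'c set" and cell :: "'c \<Rightarrow> 'p set" and Z :: "'c \<Rightarrow> 'g set"
    and path :: "'g \<Rightarrow> 'p" and E tau :: "'g \<Rightarrow> real" and M :: "'g \<Rightarrow> nat"
    and t0 :: real
  assumes "finite P"
    and "partition_on P Pi"
    and "finite \<Phi>"
    and "\<forall>\<phi>\<in>\<Phi>. cell \<phi> \<in> Pi"
    and "well_behaved verts cell \<Phi>"
    and "\<forall>\<phi>\<in>\<Phi>. finite (Z \<phi>)"
    and "\<forall>\<phi>\<in>\<Phi>. \<forall>\<gamma>\<in>Z \<phi>. path \<gamma> \<in> cell \<phi>"
    and "\<forall>\<gamma>\<in>(\<Union>\<phi>\<in>\<Phi>. Z \<phi>). E \<gamma> > 0 \<and> tau \<gamma> \<ge> 0 \<and> M \<gamma> \<ge> 1"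
  shows "\<exists>S. valid_schedule verts path E tau S \<and>
           S \<subseteq> (\<Union>\<phi>\<in>\<Phi>. Z \<phi>) \<times> UNIV \<and>
           (\<forall>\<gamma>\<in>(\<Union>\<phi>\<in>\<Phi>. Z \<phi>). card {s. (\<gamma>, s) \<in> S} = M \<gamma>) \<and>
           (\<forall>(\<gamma>, s)\<in>S. t0 \<le> s \<and> s + E \<gamma> \<le>
               t0 + Max {(\<Sum>\<theta>\<in>\<Theta>. R_set E tau M (Z \<theta>)) | \<Theta>. xi_chain verts cell \<Phi> \<Theta>})"
proof -
  define Rs where "Rs = (\<lambda>\<theta>. R_set E tau M (Z \<theta>))"
  define gt where "gt = xi_gt verts cell"
  define above where "above \<phi> = {\<Theta>. \<Theta> \<subseteq> \<Phi> \<and> (\<forall>\<theta>\<in>\<Theta>. gt \<theta> \<phi>) \<and>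
      (\<forall>a\<in>\<Theta>. \<forall>b\<in>\<Theta>. xi_ge verts cell a b \<or> xi_ge verts cell b a)}" for \<phi>
  define off where "off \<phi> = Max ((\<lambda>\<Theta>. \<Sum>\<theta>\<in>\<Theta>. Rs \<theta>) ` above \<phi>)" for \<phi>
  define Top where "Top = Max {(\<Sum>\<theta>\<in>\<Theta>. R_set E tau M (Z \<theta>)) | \<Theta>. xi_chain verts cell \<Phi> \<Theta>}"
  have gt_irr: "\<not> gt a a" for a by (simp add: gt_def xi_gt_def)
  have gt_trans: "gt a b \<Longrightarrow> gt b c \<Longrightarrow> gt a c" for a b c
    unfolding gt_def xi_gt_def by blast
  have fin_above: "finite (above \<phi>)" for \<phi>
    by (rule finite_subset[of _ "Pow \<Phi>"]) (auto simp: above_def assms(3))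
  have e_above: "{} \<in> above \<phi>" for \<phi> by (simp add: above_def)
  have off_ge: "(\<Sum>\<theta>\<in>\<Theta>. Rs \<theta>) \<le> off \<phi>" if "\<Theta> \<in> above \<phi>" for \<Theta> \<phi>
    unfolding off_def using fin_above that by (intro Max_ge) auto
  have off_nonneg: "0 \<le> off \<phi>" for \<phi> using off_ge[OF e_above] by simp
  have off_in: "\<exists>\<Theta>\<in>above \<phi>. off \<phi> = (\<Sum>\<theta>\<in>\<Theta>. Rs \<theta>)" for \<phi>
  proof -
    have "off \<phi> \<in> (\<lambda>\<Theta>. \<Sum>\<theta>\<in>\<Theta>. Rs \<theta>) ` above \<phi>"
      unfolding off_def using fin_above e_above by (intro Max_in) auto
    then show ?thesis by auto
  qed
  have fin_top: "finite {(\<Sum>\<theta>\<in>\<Theta>. R_set E tau M (Z \<theta>)) | \<Theta>. xi_chain verts cell \<Phi> \<Theta>}"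
  proof (rule finite_subset)
    show "{(\<Sum>\<theta>\<in>\<Theta>. R_set E tau M (Z \<theta>)) | \<Theta>. xi_chain verts cell \<Phi> \<Theta>}
       \<subseteq> (\<lambda>\<Theta>. \<Sum>\<theta>\<in>\<Theta>. R_set E tau M (Z \<theta>)) ` Pow \<Phi>" by (auto simp: xi_chain_def)
    show "finite ((\<lambda>\<Theta>. \<Sum>\<theta>\<in>\<Theta>. R_set E tau M (Z \<theta>)) ` Pow \<Phi>)" using assms(3) by simp
  qed
  have off_top: "off \<phi> + Rs \<phi> \<le> Top" if "\<phi> \<in> \<Phi>" for \<phi>
  proof -
    obtain \<Theta> where th: "\<Theta> \<in> above \<phi>" "off \<phi> = (\<Sum>\<theta>\<in>\<Theta>. Rs \<theta>)" using off_in by blast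
    have fin: "finite \<Theta>" using th(1) assms(3) finite_subset by (auto simp: above_def)
    have nin: "\<phi> \<notin> \<Theta>" using th(1) gt_irr by (auto simp: above_def)
    have ch: "xi_chain verts cell \<Phi> (insert \<phi> \<Theta>)"
      using th(1) that unfolding xi_chain_def above_def xi_ge_def gt_def by auto
    have "off \<phi> + Rs \<phi> = (\<Sum>\<theta>\<in>insert \<phi> \<Theta>. R_set E tau M (Z \<theta>))"
      using th(2) fin nin by (simp add: Rs_def)
    also have "\<dots> \<le> Top" unfolding Top_def using ch fin_top by (intro Max_ge) auto
    finally show ?thesis .
  qed
  have off_mono: "off \<phi> + Rs \<phi> \<le> off \<psi>" if "\<phi> \<in> \<Phi>" "gt \<phi> \<psi>" for \<phi> \<psi>
  proof -
    obtain \<Theta> where th: "\<Theta> \<in> above \<phi>" "off \<phi> = (\<Sum>\<theta>\<in>\<Theta>. Rs \<theta>)" using off_in by blast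
    have fin: "finite \<Theta>" using th(1) assms(3) finite_subset by (auto simp: above_def)
    have nin: "\<phi> \<notin> \<Theta>" using th(1) gt_irr by (auto simp: above_def)
    have ch: "insert \<phi> \<Theta> \<in> above \<psi>"
      using th(1) that gt_trans unfolding above_def xi_ge_def gt_def by blast
    have "off \<phi> + Rs \<phi> = (\<Sum>\<theta>\<in>insert \<phi> \<Theta>. Rs \<theta>)"
      using th(2) fin nin by simp
    also have "\<dots> \<le> off \<psi>" using off_ge[OF ch] .
    finally show ?thesis .
  qed
  have xi_sub: "verts (path g) \<subseteq> xi verts (cell \<phi>)" if "\<phi> \<in> \<Phi>" "g \<in> Z \<phi>" for g \<phi>
    using assms(7) that unfolding xi_def by blast
  have zdisj: "\<phi> = \<psi>" if "\<phi> \<in> \<Phi>" "\<psi> \<in> \<Phi>" "g \<in> Z \<phi>" "g \<in> Z \<psi>" for \<phi> \<psi> g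
  proof -
    have "path g \<in> cell \<phi>" "path g \<in> cell \<psi>" using assms(7) that by auto
    moreover have "cell \<phi> \<in> Pi" "cell \<psi> \<in> Pi" using assms(4) that by auto
    ultimately have "cell \<phi> = cell \<psi>" using assms(2) unfolding partition_on_def disjoint_def by blast
    then show ?thesis using assms(5) that(1,2) unfolding well_behaved_def by metis
  qed
  have cls: "\<forall>\<phi>\<in>\<Phi>. \<exists>S. okS E tau S \<and> S \<subseteq> Z \<phi> \<times> UNIV \<and> (\<forall>g\<in>Z \<phi>. card {s. (g,s)\<in>S} = M g) \<and>
      (\<forall>(g,s)\<in>S. t0 + off \<phi> \<le> s \<and> s + E g \<le> t0 + off \<phi> + Rs \<phi>)"
  proof
    fix \<phi> assume ph: "\<phi> \<in> \<Phi>"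
    define gs where "gs = (SOME gs. distinct gs \<and> set gs = Z \<phi> \<and> sorted (map M gs))"
    have gsp: "distinct gs \<and> set gs = Z \<phi> \<and> sorted (map M gs)"
      unfolding gs_def by (rule someI_ex) (rule ex_sorted_list, use assms(6) ph in blast)
    have Rg: "Rs \<phi> = R_list E tau M gs" unfolding Rs_def R_set_def gs_def by simp
    have pos: "\<forall>g\<in>set gs. E g > 0 \<and> tau g \<ge> 0 \<and> M g \<ge> 1" using gsp assms(8) ph by auto
    obtain S where S: "okS E tau S" "S \<subseteq> set gs \<times> UNIV" "\<forall>g\<in>set gs. card {s. (g,s)\<in>S} = M g"
      "\<forall>(g,s)\<in>S. (t0 + off \<phi>) + Pof E gs g \<le> s \<and> s + E g \<le> (t0 + off \<phi>) + R_list E tau M gs"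
      using class_sched[of gs M E tau "t0 + off \<phi>"] gsp pos by blast
    have "\<forall>(g,s)\<in>S. t0 + off \<phi> \<le> s \<and> s + E g \<le> t0 + off \<phi> + Rs \<phi>"
    proof (intro ballI, clarify)
      fix g s assume "(g,s) \<in> S"
      then have "(t0 + off \<phi>) + Pof E gs g \<le> s \<and> s + E g \<le> (t0 + off \<phi>) + R_list E tau M gs"
        using S(4) by blast
      moreover have "Pof E gs g \<ge> 0" using pos by (intro Pof_nonneg) auto
      ultimately show "t0 + off \<phi> \<le> s \<and> s + E g \<le> t0 + off \<phi> + Rs \<phi>" using Rg by linarith
    qed
    then show "\<exists>S. okS E tau S \<and> S \<subseteq> Z \<phi> \<times> UNIV \<and> (\<forall>g\<in>Z \<phi>. card {s. (g,s)\<in>S} = M g) \<and>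
      (\<forall>(g,s)\<in>S. t0 + off \<phi> \<le> s \<and> s + E g \<le> t0 + off \<phi> + Rs \<phi>)"
      using S gsp by (intro exI[of _ S]) auto
  qed
  then obtain Sc where Sc: "\<forall>\<phi>\<in>\<Phi>. okS E tau (Sc \<phi>) \<and> Sc \<phi> \<subseteq> Z \<phi> \<times> UNIV \<and>
      (\<forall>g\<in>Z \<phi>. card {s. (g,s)\<in>Sc \<phi>} = M g) \<and>
      (\<forall>(g,s)\<in>Sc \<phi>. t0 + off \<phi> \<le> s \<and> s + E g \<le> t0 + off \<phi> + Rs \<phi>)"
    using bchoice[OF cls] by (elim exE) (erule that)
  have ok: "okS E tau (Sc \<phi>)" if "\<phi> \<in> \<Phi>" for \<phi> using Sc that by blast
  have sub: "Sc \<phi> \<subseteq> Z \<phi> \<times> UNIV" if "\<phi> \<in> \<Phi>" for \<phi> using Sc that by blast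
  have win: "t0 + off \<phi> \<le> s \<and> s + E g \<le> t0 + off \<phi> + Rs \<phi>" if "\<phi> \<in> \<Phi>" "(g,s) \<in> Sc \<phi>" for \<phi> g s
    using Sc that by blast
  define S where "S = (\<Union>\<phi>\<in>\<Phi>. Sc \<phi>)"
  have memS: "\<exists>\<phi>\<in>\<Phi>. (g,s) \<in> Sc \<phi> \<and> g \<in> Z \<phi>" if "(g,s) \<in> S" for g s
    using that sub unfolding S_def by blast
  have memS2: "(g,s) \<in> Sc \<phi>" if "(g,s) \<in> S" "\<phi> \<in> \<Phi>" "g \<in> Z \<phi>" for g s \<phi>
    using memS[OF that(1)] zdisj that(2,3) by blast
  have Epos: "E g > 0" if "\<phi> \<in> \<Phi>" "g \<in> Z \<phi>" for g \<phi> using assms(8) that by blast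
  have finS: "finite S" unfolding S_def using assms(3) ok by (auto simp: okS_def)
  have noconf: "\<not> resource_conflict verts path E S"
  proof
    assume "resource_conflict verts path E S"
    then obtain g s g' s' where c: "(g,s) \<in> S" "(g',s') \<in> S" "(g,s) \<noteq> (g',s')"
      "verts (path g) \<inter> verts (path g') \<noteq> {}" "s \<le> s'" "s' < s + E g"
      unfolding resource_conflict_def by blast
    obtain \<phi> where ph: "\<phi> \<in> \<Phi>" "(g,s) \<in> Sc \<phi>" "g \<in> Z \<phi>" using memS[OF c(1)] by blast
    obtain \<psi> where ps: "\<psi> \<in> \<Phi>" "(g',s') \<in> Sc \<psi>" "g' \<in> Z \<psi>" using memS[OF c(2)] by blast
    show False
    proof (cases "\<phi> = \<psi>")
      case True
      then show False using ok[OF ph(1)] ph ps c(3,5,6) unfolding okS_def no_overlap_def by blast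
    next
      case False
      have "xi verts (cell \<phi>) \<inter> xi verts (cell \<psi>) \<noteq> {}"
        using c(4) xi_sub[OF ph(1) ph(3)] xi_sub[OF ps(1) ps(3)] by blast
      then have "gt \<phi> \<psi> \<or> gt \<psi> \<phi>"
        using assms(5) ph(1) ps(1) False unfolding well_behaved_def gt_def xi_gt_def by blast
      then show False
      proof
        assume "gt \<phi> \<psi>"
        then have "off \<phi> + Rs \<phi> \<le> off \<psi>" using off_mono ph(1) by blast
        then show False using win[OF ph(1,2)] win[OF ps(1,2)] c(6) by linarith
      next
        assume "gt \<psi> \<phi>"
        then have "off \<psi> + Rs \<psi> \<le> off \<phi>" using off_mono ps(1) by blast
        then show False using win[OF ph(1,2)] win[OF ps(1,2)] c(5) Epos[OF ps(1,3)] by linarith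
      qed
    qed
  qed
  have nominsep: "\<not> minsep_violation E tau S"
  proof
    assume "minsep_violation E tau S"
    then obtain g s s'' where v: "(g,s)\<in>S" "(g,s'')\<in>S" "s < s''"
      "\<not>(\<exists>s'. (g,s')\<in>S \<and> s < s' \<and> s' < s'')" "s'' - (s + E g) < tau g"
      unfolding minsep_violation_def by blast
    obtain \<phi> where ph: "\<phi> \<in> \<Phi>" "(g,s) \<in> Sc \<phi>" "g \<in> Z \<phi>" using memS[OF v(1)] by blast
    have "(g,s'') \<in> Sc \<phi>" using memS2[OF v(2) ph(1,3)] .
    moreover have "\<not>(\<exists>s'. (g,s')\<in>Sc \<phi> \<and> s < s' \<and> s' < s'')" using v(4) ph(1) unfolding S_def by blast
    ultimately have "minsep_violation E tau (Sc \<phi>)"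
      unfolding minsep_violation_def using ph(2) v(3,5) by blast
    then show False using ok[OF ph(1)] by (simp add: okS_def)
  qed
  have "valid_schedule verts path E tau S"
    using finS noconf nominsep by (simp add: valid_schedule_def)
  moreover have "S \<subseteq> (\<Union>\<phi>\<in>\<Phi>. Z \<phi>) \<times> UNIV" unfolding S_def using sub by blast
  moreover have "\<forall>\<gamma>\<in>(\<Union>\<phi>\<in>\<Phi>. Z \<phi>). card {s. (\<gamma>, s) \<in> S} = M \<gamma>"
  proof
    fix \<gamma> assume "\<gamma> \<in> (\<Union>\<phi>\<in>\<Phi>. Z \<phi>)"
    then obtain \<phi> where ph: "\<phi> \<in> \<Phi>" "\<gamma> \<in> Z \<phi>" by blast
    have "{s. (\<gamma>, s) \<in> S} = {s. (\<gamma>, s) \<in> Sc \<phi>}"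
      using memS2[OF _ ph] ph(1) unfolding S_def by blast
    then show "card {s. (\<gamma>, s) \<in> S} = M \<gamma>" using Sc ph by auto
  qed
  moreover have "\<forall>(\<gamma>, s)\<in>S. t0 \<le> s \<and> s + E \<gamma> \<le> t0 + Top"
  proof (intro ballI, clarify)
    fix g s assume "(g,s) \<in> S"
    then obtain \<phi> where ph: "\<phi> \<in> \<Phi>" "(g,s) \<in> Sc \<phi>" "g \<in> Z \<phi>" using memS by blast
    show "t0 \<le> s \<and> s + E g \<le> t0 + Top"
      using win[OF ph(1,2)] off_nonneg[of \<phi>] off_top[OF ph(1)] by linarith
  qed
  ultimately show ?thesis unfolding Top_def by blast
qed

end
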